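(* Let $S$ be a solid and let $x,y,z\in S$. If $y$ and $z$ are of the same sign (both positive or both negative), then $x(y+z)=xy+xz$.
   Context: A solid is a set $S$ with two binary operations $+$ and $\cdot$ (written $xy$) and a binary relation $\le$ satisfying the following axioms (all variables range over $S$). (A1) $+$ is associative and commutative. (A2) For each $x$ there is $e$ with $x+e=x$ such that $e+f=e$ for every $f$ with $x+f=x$; this $e$ is unique and is denoted $e(x)$ (the magnitude of $x$). An element $x$ with $x=e(x)$ is called a magnitude. (A3) For each $x$ there is $s$ with $x+s=e(x)$ and $e(s)=e(x)$; it is unique and denoted $-x$; write $x-y$ for $x+(-y)$. (A4) $e(x+y)=e(x)$ or $e(x+y)=e(y)$. (M1) $\cdot$ is associative and commutative. (M2) For each $x\neq e(x)$ there is $u$ with $xu=x$ such that $uv=u$ for every $v$ with $xv=x$; it is unique and denoted $u(x)$. (M3) For each $x\ne e(x)$ there is $d$ with $xd=u(x)$ and $u(d)=u(x)$; it is unique and denoted $x^{-1}$; write $y/x$ for $yx^{-1}$. (M4) If $x\neq e(x)$ and $y\ne e(y)$ then $u(xy)=u(x)$ or $u(xy)=u(y)$. (O1) $\le$ is a total order (reflexive, antisymmetric, transitive, total); $x<y$ means $x\le y$ and $x\ne y$. (O2) $x\le y\Rightarrow x+z\le y+z$. (O3) $y+e(x)=e(x)\Rightarrow (y\le e(x)$ and $-y\le e(x))$. (O4) $(e(x)<x$ and $y\le z)\Rightarrow xy\le xz$. (O5) $e(y)\le y\le z\Rightarrow e(x)y\le e(x)z$. (AM1) For all $x,y$ there is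 $z$ with $e(x)y=e(z)$. (AM2) $e(xy)=e(x)y+e(y)x$. (AM3) If $x\ne e(x)$ then $e(u(x))=e(x)/x$. (AM4) (distributivity axiom) $xy+xz=x(y+z)+e(x)y+e(x)z$. (AM5) $-(xy)=(-x)y$. (E1) There is $m$ with $m+x=x$ for all $x$; it is unique, called zero and denoted $0$. (E2) There is $u$ with $ux=x$ for all $x$; it is unique, called one and denoted $1$. (E3) There is $M$ with $e(x)+M=M$ for all $x$. (E4) There is $x$ with $e(x)\ne 0$ and $e(x)\ne M$. (E5) For every $x$ there is $a$ with $x=a+e(x)$ and $e(a)=0$. (E6) If $x,y$ are magnitudes with $x<y$, there is $z$ with $z\ne e(z)$ and $x<z<y$. Further notation: $S^*=\{x\in S: x\ne e(x)\}$ (zeroless elements). $x$ is positive if $e(x)\le x$ and negative if $x<e(x)$; $|x|=x$ if $x$ is positive and $|x|=-x$ if $x$ is negative. $x$ is precise if $e(x)=0$. The relative uncertainty $R(x)$ is $e(u(x))$ if $x\ne e(x)$, and $M$ (from (E3)) if $x=e(x)$. *)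

theory Defs
  imports Main
begin

text \<open>A solid is a type 'a (the set S) with addition pl, multiplication tm and order le.
  Derived operations are defined by definite description from the axioms.\<close>

definition mag :: "('a \<Rightarrow> 'a \<Rightarrow> 'a) \<Rightarrow> 'a \<Rightarrow> 'a" where
  "mag pl x = (THE e. pl x e = x \<and> (\<forall>f. pl x f = x \<longrightarrow> pl e f = e))"

definition neg :: "('a \<Rightarrow> 'a \<Rightarrow> 'a) \<Rightarrow> 'a \<Rightarrow> 'a" where
  "neg pl x = (THE s. pl x s = mag pl x \<and> mag pl s = mag pl x)"

definition unt :: "('a \<Rightarrow> 'a \<Rightarrow> 'a) \<Rightarrow> 'a \<Rightarrow> 'a" where
  "unt tm x = (THE u. tm x u = x \<and> (\<forall>v. tm x v = x \<longrightarrow> tm u v = u))"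

definition inv :: "('a \<Rightarrow> 'a \<Rightarrow> 'a) \<Rightarrow> 'a \<Rightarrow> 'a" where
  "inv tm x = (THE d. tm x d = unt tm x \<and> unt tm d = unt tm x)"

definition zer :: "('a \<Rightarrow> 'a \<Rightarrow> 'a) \<Rightarrow> 'a" where
  "zer pl = (THE m. \<forall>x. pl m x = x)"

definition solid :: "('a \<Rightarrow> 'a \<Rightarrow> 'a) \<Rightarrow> ('a \<Rightarrow> 'a \<Rightarrow> 'a) \<Rightarrow> ('a \<Rightarrow> 'a \<Rightarrow> bool) \<Rightarrow> bool" where
  "solid pl tm le \<longleftrightarrow>
    \<comment> \<open>A1\<close>
    (\<forall>x y z. pl (pl x y) z = pl x (pl y z)) \<and> (\<forall>x y. pl x y = pl y x) \<and>
    \<comment> \<open>A2\<close>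
    (\<forall>x. \<exists>e. pl x e = x \<and> (\<forall>f. pl x f = x \<longrightarrow> pl e f = e)) \<and>
    \<comment> \<open>A3\<close>
    (\<forall>x. \<exists>!s. pl x s = mag pl x \<and> mag pl s = mag pl x) \<and>
    \<comment> \<open>A4\<close>
    (\<forall>x y. mag pl (pl x y) = mag pl x \<or> mag pl (pl x y) = mag pl y) \<and>
    \<comment> \<open>M1\<close>
    (\<forall>x y z. tm (tm x y) z = tm x (tm y z)) \<and> (\<forall>x y. tm x y = tm y x) \<and>
    \<comment> \<open>M2\<close>
    (\<forall>x. x \<noteq> mag pl x \<longrightarrow> (\<exists>u. tm x u = x \<and> (\<forall>v. tm x v = x \<longrightarrow> tm u v = u))) \<and>
    \<comment> \<open>M3\<close>
    (\<forall>x. x \<noteq> mag pl x \<longrightarrow> (\<exists>!d. tm x d = unt tm x \<and> unt tm d = unt tm x)) \<and>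
    \<comment> \<open>M4\<close>
    (\<forall>x y. x \<noteq> mag pl x \<longrightarrow> y \<noteq> mag pl y \<longrightarrow>
        unt tm (tm x y) = unt tm x \<or> unt tm (tm x y) = unt tm y) \<and>
    \<comment> \<open>O1\<close>
    (\<forall>x. le x x) \<and> (\<forall>x y. le x y \<longrightarrow> le y x \<longrightarrow> x = y) \<and>
    (\<forall>x y z. le x y \<longrightarrow> le y z \<longrightarrow> le x z) \<and> (\<forall>x y. le x y \<or> le y x) \<and>
    \<comment> \<open>O2\<close>
    (\<forall>x y z. le x y \<longrightarrow> le (pl x z) (pl y z)) \<and>
    \<comment> \<open>O3\<close>
    (\<forall>x y. pl y (mag pl x) = mag pl x \<longrightarrow> le y (mag pl x) \<and> le (neg pl y) (mag pl x)) \<and>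
    \<comment> \<open>O4\<close>
    (\<forall>x y z. (le (mag pl x) x \<and> mag pl x \<noteq> x \<and> le y z) \<longrightarrow> le (tm x y) (tm x z)) \<and>
    \<comment> \<open>O5\<close>
    (\<forall>x y z. le (mag pl y) y \<longrightarrow> le y z \<longrightarrow> le (tm (mag pl x) y) (tm (mag pl x) z)) \<and>
    \<comment> \<open>AM1\<close>
    (\<forall>x y. \<exists>z. tm (mag pl x) y = mag pl z) \<and>
    \<comment> \<open>AM2\<close>
    (\<forall>x y. mag pl (tm x y) = pl (tm (mag pl x) y) (tm (mag pl y) x)) \<and>
    \<comment> \<open>AM3\<close>
    (\<forall>x. x \<noteq> mag pl x \<longrightarrow> mag pl (unt tm x) = tm (mag pl x) (inv tm x)) \<and>
    \<comment> \<open>AM4\<close>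
    (\<forall>x y z. pl (tm x y) (tm x z) = pl (pl (tm x (pl y z)) (tm (mag pl x) y)) (tm (mag pl x) z)) \<and>
    \<comment> \<open>AM5\<close>
    (\<forall>x y. neg pl (tm x y) = tm (neg pl x) y) \<and>
    \<comment> \<open>E1\<close>
    (\<exists>m. \<forall>x. pl m x = x) \<and>
    \<comment> \<open>E2\<close>
    (\<exists>u. \<forall>x. tm u x = x) \<and>
    \<comment> \<open>E3 and E4 (E4 refers to the M of E3)\<close>
    (\<exists>M. (\<forall>x. pl (mag pl x) M = M) \<and> (\<exists>x. mag pl x \<noteq> zer pl \<and> mag pl x \<noteq> M)) \<and>
    \<comment> \<open>E5\<close>
    (\<forall>x. \<exists>a. x = pl a (mag pl x) \<and> mag pl a = zer pl) \<and>
    \<comment> \<open>E6\<close>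
    (\<forall>x y. x = mag pl x \<longrightarrow> y = mag pl y \<longrightarrow> le x y \<longrightarrow> x \<noteq> y \<longrightarrow>
        (\<exists>z. z \<noteq> mag pl z \<and> le x z \<and> x \<noteq> z \<and> le z y \<and> z \<noteq> y))"

definition positive :: "('a \<Rightarrow> 'a \<Rightarrow> 'a) \<Rightarrow> ('a \<Rightarrow> 'a \<Rightarrow> bool) \<Rightarrow> 'a \<Rightarrow> bool" where
  "positive pl le x \<longleftrightarrow> le (mag pl x) x"

definition negative :: "('a \<Rightarrow> 'a \<Rightarrow> 'a) \<Rightarrow> ('a \<Rightarrow> 'a \<Rightarrow> bool) \<Rightarrow> 'a \<Rightarrow> bool" where
  "negative pl le x \<longleftrightarrow> le x (mag pl x) \<and> x \<noteq> mag pl x"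

end

theory Submission
  imports Defs
begin

locale sol =
  fixes pl tm :: "'a \<Rightarrow> 'a \<Rightarrow> 'a" and le :: "'a \<Rightarrow> 'a \<Rightarrow> bool"
  assumes S: "solid pl tm le"
begin

lemmas ax = S[unfolded solid_def]

lemma assoc: "pl (pl x y) z = pl x (pl y z)" using ax[THEN conjunct1] by blast
lemma comm: "pl x y = pl y x" using ax[THEN conjunct2, THEN conjunct1] by blast
lemma A2: "\<exists>e. pl x e = x \<and> (\<forall>f. pl x f = x \<longrightarrow> pl e f = e)" using ax[THEN conjunct2, THEN conjunct2, THEN conjunct1] by blast
lemma A3: "\<exists>!s. pl x s = mag pl x \<and> mag pl s = mag pl x" using ax[THEN conjunct2, THEN conjunct2, THEN conjunct2, THEN conjunct1] by blast
lemma A4: "mag pl (pl x y) = mag pl x \<or> mag pl (pl x y) = mag pl y" using ax[THEN conjunct2, THEN conjunct2, THEN conjunct2, THEN conjunct2, THEN conjunct1] by blast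
lemma tcomm: "tm x y = tm y x" using ax[THEN conjunct2, THEN conjunct2, THEN conjunct2, THEN conjunct2, THEN conjunct2, THEN conjunct2, THEN conjunct1] by blast
lemma refl: "le x x" using ax[THEN conjunct2, THEN conjunct2, THEN conjunct2, THEN conjunct2, THEN conjunct2, THEN conjunct2, THEN conjunct2, THEN conjunct2, THEN conjunct2, THEN conjunct2, THEN conjunct1] by blast
lemma antisym: "le x y \<Longrightarrow> le y x \<Longrightarrow> x = y" using ax[THEN conjunct2, THEN conjunct2, THEN conjunct2, THEN conjunct2, THEN conjunct2, THEN conjunct2, THEN conjunct2, THEN conjunct2, THEN conjunct2, THEN conjunct2, THEN conjunct2, THEN conjunct1] by blast
lemma trans: "le x y \<Longrightarrow> le y z \<Longrightarrow> le x z" using ax[THEN conjunct2, THEN conjunct2, THEN conjunct2, THEN conjunct2, THEN conjunct2, THEN conjunct2, THEN conjunct2, THEN conjunct2, THEN conjunct2, THEN conjunct2, THEN conjunct2, THEN conjunct2, THEN conjunct1] by blast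
lemma total: "le x y \<or> le y x" using ax[THEN conjunct2, THEN conjunct2, THEN conjunct2, THEN conjunct2, THEN conjunct2, THEN conjunct2, THEN conjunct2, THEN conjunct2, THEN conjunct2, THEN conjunct2, THEN conjunct2, THEN conjunct2, THEN conjunct2, THEN conjunct1] by blast
lemma O2: "le x y \<Longrightarrow> le (pl x z) (pl y z)" using ax[THEN conjunct2, THEN conjunct2, THEN conjunct2, THEN conjunct2, THEN conjunct2, THEN conjunct2, THEN conjunct2, THEN conjunct2, THEN conjunct2, THEN conjunct2, THEN conjunct2, THEN conjunct2, THEN conjunct2, THEN conjunct2, THEN conjunct1] by blast
lemma O3: "pl y (mag pl x) = mag pl x \<Longrightarrow> le y (mag pl x)" using ax[THEN conjunct2, THEN conjunct2, THEN conjunct2, THEN conjunct2, THEN conjunct2, THEN conjunct2, THEN conjunct2, THEN conjunct2, THEN conjunct2, THEN conjunct2, THEN conjunct2, THEN conjunct2, THEN conjunct2, THEN conjunct2, THEN conjunct2, THEN conjunct1] by blast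
lemma O5: "le (mag pl y) y \<Longrightarrow> le y z \<Longrightarrow> le (tm (mag pl x) y) (tm (mag pl x) z)"
  using ax[THEN conjunct2, THEN conjunct2, THEN conjunct2, THEN conjunct2, THEN conjunct2, THEN conjunct2, THEN conjunct2, THEN conjunct2, THEN conjunct2, THEN conjunct2, THEN conjunct2, THEN conjunct2, THEN conjunct2, THEN conjunct2, THEN conjunct2, THEN conjunct2, THEN conjunct2, THEN conjunct1] by blast
lemma AM1: "\<exists>z. tm (mag pl x) y = mag pl z" using ax[THEN conjunct2, THEN conjunct2, THEN conjunct2, THEN conjunct2, THEN conjunct2, THEN conjunct2, THEN conjunct2, THEN conjunct2, THEN conjunct2, THEN conjunct2, THEN conjunct2, THEN conjunct2, THEN conjunct2, THEN conjunct2, THEN conjunct2, THEN conjunct2, THEN conjunct2, THEN conjunct2, THEN conjunct1] by blast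
lemma AM2: "mag pl (tm x y) = pl (tm (mag pl x) y) (tm (mag pl y) x)" using ax[THEN conjunct2, THEN conjunct2, THEN conjunct2, THEN conjunct2, THEN conjunct2, THEN conjunct2, THEN conjunct2, THEN conjunct2, THEN conjunct2, THEN conjunct2, THEN conjunct2, THEN conjunct2, THEN conjunct2, THEN conjunct2, THEN conjunct2, THEN conjunct2, THEN conjunct2, THEN conjunct2, THEN conjunct2, THEN conjunct1] by blast
lemma AM4: "pl (tm x y) (tm x z) = pl (pl (tm x (pl y z)) (tm (mag pl x) y)) (tm (mag pl x) z)"
  using ax[THEN conjunct2, THEN conjunct2, THEN conjunct2, THEN conjunct2, THEN conjunct2, THEN conjunct2, THEN conjunct2, THEN conjunct2, THEN conjunct2, THEN conjunct2, THEN conjunct2, THEN conjunct2, THEN conjunct2, THEN conjunct2, THEN conjunct2, THEN conjunct2, THEN conjunct2, THEN conjunct2, THEN conjunct2, THEN conjunct2, THEN conjunct2, THEN conjunct1] by blast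
lemma AM5: "neg pl (tm x y) = tm (neg pl x) y" using ax[THEN conjunct2, THEN conjunct2, THEN conjunct2, THEN conjunct2, THEN conjunct2, THEN conjunct2, THEN conjunct2, THEN conjunct2, THEN conjunct2, THEN conjunct2, THEN conjunct2, THEN conjunct2, THEN conjunct2, THEN conjunct2, THEN conjunct2, THEN conjunct2, THEN conjunct2, THEN conjunct2, THEN conjunct2, THEN conjunct2, THEN conjunct2, THEN conjunct2, THEN conjunct1] by blast
lemma E1: "\<exists>m. \<forall>x. pl m x = x" using ax[THEN conjunct2, THEN conjunct2, THEN conjunct2, THEN conjunct2, THEN conjunct2, THEN conjunct2, THEN conjunct2, THEN conjunct2, THEN conjunct2, THEN conjunct2, THEN conjunct2, THEN conjunct2, THEN conjunct2, THEN conjunct2, THEN conjunct2, THEN conjunct2, THEN conjunct2, THEN conjunct2, THEN conjunct2, THEN conjunct2, THEN conjunct2, THEN conjunct2, THEN conjunct2, THEN conjunct1] by blast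

lemma mag_ex1: "\<exists>!e. pl x e = x \<and> (\<forall>f. pl x f = x \<longrightarrow> pl e f = e)"
proof -
  obtain e where e: "pl x e = x \<and> (\<forall>f. pl x f = x \<longrightarrow> pl e f = e)" using A2 by blast
  show ?thesis
  proof (rule ex1I[of _ e])
    show "pl x e = x \<and> (\<forall>f. pl x f = x \<longrightarrow> pl e f = e)" by (rule e)
    fix e' assume "pl x e' = x \<and> (\<forall>f. pl x f = x \<longrightarrow> pl e' f = e')"
    with e show "e' = e" by (metis comm)
  qed
qed

lemma mag1: "pl x (mag pl x) = x" and mag2: "pl x f = x \<Longrightarrow> pl (mag pl x) f = mag pl x"
  using theI'[OF mag_ex1[of x]] unfolding mag_def[symmetric] by auto

lemma mag_eqI: "pl x e = x \<Longrightarrow> (\<And>f. pl x f = x \<Longrightarrow> pl e f = e) \<Longrightarrow> mag pl x = e"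
  using mag_ex1[of x] mag1 mag2 by blast

lemma magmag: "mag pl (mag pl x) = mag pl x"
proof -
  have "pl (mag pl x) (mag pl x) = mag pl x" using mag2[OF mag1] .
  then show ?thesis by (intro mag_eqI) auto
qed

lemma neg1: "pl x (neg pl x) = mag pl x" and neg2: "mag pl (neg pl x) = mag pl x"
  using theI'[OF A3[of x]] unfolding neg_def[symmetric] by auto

lemma neg_eqI: "pl x s = mag pl x \<Longrightarrow> mag pl s = mag pl x \<Longrightarrow> neg pl x = s"
  using A3[of x] neg1 neg2 by blast

lemma zero_ex1: "\<exists>!m. \<forall>x. pl m x = x"
  using E1 by (metis comm)

lemma zero: "pl (zer pl) x = x"
  using theI'[OF zero_ex1] unfolding zer_def[symmetric] by auto

definition ismag where "ismag p \<longleftrightarrow> mag pl p = p"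

lemma ismag_mag: "ismag (mag pl x)" using magmag ismag_def by simp

lemma magself: "ismag p \<Longrightarrow> pl p p = p"
  using mag1[of p] unfolding ismag_def by simp

lemma magsum: "ismag p \<Longrightarrow> ismag q \<Longrightarrow> pl p q = p \<or> pl p q = q"
proof -
  assume p: "ismag p" and q: "ismag q"
  let ?s = "pl p q"
  have ss: "pl ?s ?s = ?s" using magself[OF p] magself[OF q] by (metis assoc comm)
  have h: "pl (mag pl ?s) ?s = mag pl ?s" using mag2[OF ss] .
  from A4[of p q] p q have "mag pl ?s = p \<or> mag pl ?s = q" unfolding ismag_def by simp
  then show ?thesis
  proof
    assume e: "mag pl ?s = p"
    have "pl p ?s = ?s" using magself[OF p] by (metis assoc)
    with h e show ?thesis by simp
  next
    assume e: "mag pl ?s = q"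
    have "pl q ?s = ?s" using magself[OF q] by (metis assoc comm)
    with h e show ?thesis by simp
  qed
qed

lemma magle: "ismag p \<Longrightarrow> ismag q \<Longrightarrow> le p q \<Longrightarrow> pl q p = q"
proof -
  assume p: "ismag p" and q: "ismag q" and l: "le p q"
  from magsum[OF p q] show ?thesis
  proof
    assume "pl p q = p"
    then have "pl q (mag pl p) = mag pl p" using p unfolding ismag_def by (simp add: comm)
    then have "le q p" using O3[of q p] p unfolding ismag_def by simp
    with l antisym have "p = q" by blast
    then show ?thesis using magself[OF q] by simp
  next
    assume "pl p q = q" then show ?thesis by (simp add: comm)
  qed
qed

lemma mag_add: "mag pl (pl a b) = pl (mag pl a) (mag pl b)"
proof -
  let ?m = "pl (mag pl a) (mag pl b)"
  have "pl (pl a b) ?m = pl a b" using mag1[of a] mag1[of b] by (metis assoc comm)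
  then have h: "pl (mag pl (pl a b)) ?m = mag pl (pl a b)" by (rule mag2)
  from A4[of a b] show ?thesis
  proof
    assume e: "mag pl (pl a b) = mag pl a"
    have "pl (mag pl a) ?m = ?m" using magself[OF ismag_mag[of a]] by (metis assoc)
    with h e show ?thesis by simp
  next
    assume e: "mag pl (pl a b) = mag pl b"
    have "pl (mag pl b) ?m = ?m" using magself[OF ismag_mag[of b]] by (metis assoc comm)
    with h e show ?thesis by simp
  qed
qed

lemma neg_add: "neg pl (pl y z) = pl (neg pl y) (neg pl z)"
proof (rule neg_eqI)
  show "pl (pl y z) (pl (neg pl y) (neg pl z)) = mag pl (pl y z)"
    using neg1[of y] neg1[of z] mag_add[of y z] by (metis assoc comm)
  show "mag pl (pl (neg pl y) (neg pl z)) = mag pl (pl y z)"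
    using mag_add neg2 by metis
qed

lemma neg_mag: "ismag p \<Longrightarrow> neg pl p = p"
  by (rule neg_eqI) (auto simp: ismag_def magself)

lemma tmag: "ismag (tm (mag pl x) y)"
  using AM1[of x y] ismag_mag by metis

lemma tmag_neg: "tm (mag pl x) (neg pl y) = tm (mag pl x) y"
proof -
  have "tm (mag pl x) (neg pl y) = tm (neg pl y) (mag pl x)" by (rule tcomm)
  also have "\<dots> = neg pl (tm y (mag pl x))" by (rule AM5[symmetric])
  also have "\<dots> = neg pl (tm (mag pl x) y)" by (simp add: tcomm)
  also have "\<dots> = tm (mag pl x) y" by (rule neg_mag[OF tmag])
  finally show ?thesis .
qed

lemma zero_le_mag: "le (zer pl) (mag pl x)"
  using O3[of "zer pl" x] zero by blast

lemma pos_le_add: "le (mag pl a) a \<Longrightarrow> le (mag pl b) b \<Longrightarrow> le a (pl a b)"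
proof -
  assume b: "le (mag pl b) b"
  have "le (pl (zer pl) a) (pl (mag pl b) a)" by (rule O2[OF zero_le_mag])
  moreover have "le (pl (mag pl b) a) (pl b a)" by (rule O2[OF b])
  ultimately show ?thesis using trans zero comm by metis
qed

lemma neg_pos: "le y (mag pl y) \<Longrightarrow> le (mag pl (neg pl y)) (neg pl y)"
proof -
  assume "le y (mag pl y)"
  then have "le (pl y (neg pl y)) (pl (mag pl y) (neg pl y))" by (rule O2)
  moreover have "pl (mag pl y) (neg pl y) = neg pl y"
    using mag1[of "neg pl y"] neg2[of y] by (simp add: comm)
  ultimately show ?thesis using neg1 neg2 by simp
qed

lemma key_pos: "le (mag pl y) y \<Longrightarrow> le (mag pl z) z \<Longrightarrow>
   le (tm (mag pl x) y) (tm (mag pl x) (pl y z))"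
  using O5 pos_le_add by blast

lemma key:
  assumes "(positive pl le y \<and> positive pl le z) \<or> (negative pl le y \<and> negative pl le z)"
  shows "le (tm (mag pl x) y) (tm (mag pl x) (pl y z))"
  using assms
proof
  assume "positive pl le y \<and> positive pl le z"
  then show ?thesis using key_pos unfolding positive_def by blast
next
  assume "negative pl le y \<and> negative pl le z"
  then have "le (mag pl (neg pl y)) (neg pl y)" "le (mag pl (neg pl z)) (neg pl z)"
    using neg_pos unfolding negative_def by auto
  then have "le (tm (mag pl x) (neg pl y)) (tm (mag pl x) (pl (neg pl y) (neg pl z)))"
    by (rule key_pos)
  then show ?thesis using tmag_neg neg_add by metis
qed

lemma main:
  assumes "(positive pl le y \<and> positive pl le z) \<or> (negative pl le y \<and> negative pl le z)"
  shows "tm x (pl y z) = pl (tm x y) (tm x z)"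
proof -
  have sym: "(positive pl le z \<and> positive pl le y) \<or> (negative pl le z \<and> negative pl le y)"
    using assms by blast
  let ?A = "tm (mag pl x) (pl y z)"
  let ?B = "tm (mag pl (pl y z)) x"
  let ?p = "tm (mag pl x) y" and ?q = "tm (mag pl x) z"
  have l1: "pl ?A ?p = ?A" using magle[OF tmag tmag key[OF assms]] .
  have l2: "pl ?A ?q = ?A" using magle[OF tmag tmag key[OF sym]] by (simp add: comm)
  let ?w = "tm x (pl y z)"
  have ew: "mag pl ?w = pl ?A ?B" by (rule AM2)
  have "pl (mag pl ?w) (pl ?p ?q) = mag pl ?w"
    unfolding ew using l1 l2 by (metis assoc comm)
  then have "pl ?w (pl ?p ?q) = ?w" using mag1[of ?w] by (metis assoc)
  then show ?thesis using AM4[of x y z] by (metis assoc)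
qed

end

theorem mainTheorem4:
  fixes pl tm :: "'a \<Rightarrow> 'a \<Rightarrow> 'a" and le :: "'a \<Rightarrow> 'a \<Rightarrow> bool" and x y z :: 'a
  assumes "solid pl tm le"
    and "(positive pl le y \<and> positive pl le z) \<or> (negative pl le y \<and> negative pl le z)"
  shows "tm x (pl y z) = pl (tm x y) (tm x z)"
proof -
  interpret sol pl tm le by standard (rule assms(1))
  show ?thesis by (rule main[OF assms(2)])
qed

end
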